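(* Under Assumption 1 and the partition setting of the context, the optimal value of the convex relaxation (R) equals the optimal value of the convex relaxation (R'): $\min\ \sum_{h\in H}d_h^*w_h+\sum_{h\in H}\sum_{j\in N_h}(D_{jj}-d_h^* )x_j^2+2\sum_{h\in H}\sum_{j\in N_h}c_jx_j$ subject to $\sum_{h\in H}\xi^{ih}w_h+2\sum_{h\in H}\sum_{j\in N_h}a_{ij}x_j\le b_i$ ($i\in M$) and $\sum_{j\in N_h}x_j^2\le w_h$ ($h\in H$), over ${\bf x}\in\mathbb{R}^n$, ${\bf w}\in\mathbb{R}^{H}$. Consequently the optimal value of (R') also equals that of the Shor relaxation (S).
   Context: Let $N=\{1,\dots,n\}$ and $M=\{1,\dots,m\}$. Let ${\bf D}$ and ${\bf A}^i$ ($i\in M$) be real diagonal $n\times n$ matrices, ${\bf c},{\bf a}_i\in\mathbb{R}^n$ ($a_{ij}$ denotes the $j$-th entry of ${\bf a}_i$) and $b_i\in\mathbb{R}$. The diagonal QCQP is (P): $c^\star=\inf\{{\bf x}^\top{\bf D}{\bf x}+2{\bf c}^\top{\bf x} : {\bf x}^\top{\bf A}^i{\bf x}+2{\bf a}_i^\top{\bf x}\le b_i,\ i\in M\}$. Its Shor relaxation is (S): $v^\star=\inf\{{\bf D}\bullet{\bf X}+2{\bf c}^\top{\bf x} : {\bf A}^i\bullet{\bf X}+2{\bf a}_i^\top{\bf x}\le b_i\ (i\in M),\ {\bf X}-{\bf x}{\bf x}^\top\succeq {\bf O}\}$, where ${\bf P}\bullet{\bf Q}=\mathrm{trace}({\bf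 P}{\bf Q})$. The convex relaxation is (R): $p^\star=\inf\{\sum_{j\in N}D_{jj}z_j+2\sum_{j\in N}c_jx_j : \sum_{j\in N}A^i_{jj}z_j+2\sum_{j\in N}a_{ij}x_j\le b_i\ (i\in M),\ x_j^2\le z_j\ (j\in N)\}$. Assumption 1: (i) the feasible region of (P) is nonempty; (ii) there exists $\bar{\bf y}\ge 0$ with $\sum_{i\in M}\bar y_i{\bf A}^i\succ{\bf O}$; (iii) the feasible region of (S) has nonempty interior. Partition setting: $\{N_h\}_{h\in H}$ is a partition of $N$ such that for each $h\in H$ and $i\in M$ there is a number $\xi^{ih}$ with $A^i_{jj}=\xi^{ih}$ for all $j\in N_h$. For each $h\in H$, $d_h^*=\min_{j\in N_h}D_{jj}$ and it is assumed that this minimum is attained at a unique index $j_h\in N_h$. *)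

theory Defs
  imports "HOL-Analysis.Analysis"
begin

text \<open>Vectors in R^n are functions nat => real, only the entries indexed by
  N = {1..n} matter. n x n matrices are functions nat => nat => real restricted to N.
  The diagonal matrices D, A^i are given by their diagonal entries.\<close>

definition diag_mat :: "(nat \<Rightarrow> real) \<Rightarrow> nat \<Rightarrow> nat \<Rightarrow> real" where
  "diag_mat d = (\<lambda>i j. if i = j then d i else 0)"

definition mat_sym :: "nat set \<Rightarrow> (nat \<Rightarrow> nat \<Rightarrow> real) \<Rightarrow> bool" where
  "mat_sym I X \<longleftrightarrow> (\<forall>i\<in>I. \<forall>j\<in>I. X i j = X j i)"

definition mat_psd :: "nat set \<Rightarrow> (nat \<Rightarrow> nat \<Rightarrow> real) \<Rightarrow> bool" where
  "mat_psd I X \<longleftrightarrow> mat_sym I X \<and>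
     (\<forall>v::nat \<Rightarrow> real. (\<Sum>i\<in>I. \<Sum>j\<in>I. v i * X i j * v j) \<ge> 0)"

definition mat_pd :: "nat set \<Rightarrow> (nat \<Rightarrow> nat \<Rightarrow> real) \<Rightarrow> bool" where
  "mat_pd I X \<longleftrightarrow> mat_sym I X \<and>
     (\<forall>v::nat \<Rightarrow> real. (\<exists>i\<in>I. v i \<noteq> 0) \<longrightarrow> (\<Sum>i\<in>I. \<Sum>j\<in>I. v i * X i j * v j) > 0)"

definition mat_dot :: "nat set \<Rightarrow> (nat \<Rightarrow> nat \<Rightarrow> real) \<Rightarrow> (nat \<Rightarrow> nat \<Rightarrow> real) \<Rightarrow> real" where
  "mat_dot I P Q = (\<Sum>i\<in>I. \<Sum>j\<in>I. P i j * Q j i)"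

text \<open>Feasible region of (P). A i j = A^i_jj, a i j = a_ij.\<close>
definition feas_P :: "nat \<Rightarrow> nat \<Rightarrow> (nat \<Rightarrow> nat \<Rightarrow> real) \<Rightarrow> (nat \<Rightarrow> nat \<Rightarrow> real)
    \<Rightarrow> (nat \<Rightarrow> real) \<Rightarrow> (nat \<Rightarrow> real) set" where
  "feas_P n m A a b = {x. \<forall>i\<in>{1..m}.
      (\<Sum>j\<in>{1..n}. A i j * x j ^ 2) + 2 * (\<Sum>j\<in>{1..n}. a i j * x j) \<le> b i}"

definition feas_S :: "nat \<Rightarrow> nat \<Rightarrow> (nat \<Rightarrow> nat \<Rightarrow> real) \<Rightarrow> (nat \<Rightarrow> nat \<Rightarrow> real)
    \<Rightarrow> (nat \<Rightarrow> real) \<Rightarrow> ((nat \<Rightarrow> real) \<times> (nat \<Rightarrow> nat \<Rightarrow> real)) set" where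
  "feas_S n m A a b = {(x, X).
      (\<forall>i\<in>{1..m}. mat_dot {1..n} (diag_mat (A i)) X + 2 * (\<Sum>j\<in>{1..n}. a i j * x j) \<le> b i)
      \<and> mat_psd {1..n} (\<lambda>k l. X k l - x k * x l)}"

text \<open>Nonempty interior of the feasible region of (S), in the space
  R^n \<times> (symmetric n x n matrices) (topology via entrywise max-norm).\<close>
definition S_nonempty_interior :: "nat \<Rightarrow> nat \<Rightarrow> (nat \<Rightarrow> nat \<Rightarrow> real) \<Rightarrow> (nat \<Rightarrow> nat \<Rightarrow> real)
    \<Rightarrow> (nat \<Rightarrow> real) \<Rightarrow> bool" where
  "S_nonempty_interior n m A a b \<longleftrightarrow>
     (\<exists>x0 X0 (e::real). e > 0 \<and> mat_sym {1..n} X0 \<and>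
        (\<forall>x X. mat_sym {1..n} X \<and> (\<forall>j\<in>{1..n}. \<bar>x j - x0 j\<bar> < e)
           \<and> (\<forall>k\<in>{1..n}. \<forall>l\<in>{1..n}. \<bar>X k l - X0 k l\<bar> < e)
           \<longrightarrow> (x, X) \<in> feas_S n m A a b))"

definition val_S :: "nat \<Rightarrow> nat \<Rightarrow> (nat \<Rightarrow> real) \<Rightarrow> (nat \<Rightarrow> real) \<Rightarrow> (nat \<Rightarrow> nat \<Rightarrow> real)
    \<Rightarrow> (nat \<Rightarrow> nat \<Rightarrow> real) \<Rightarrow> (nat \<Rightarrow> real) \<Rightarrow> ereal" where
  "val_S n m D c A a b = Inf ((\<lambda>(x, X). ereal (mat_dot {1..n} (diag_mat D) X
        + 2 * (\<Sum>j\<in>{1..n}. c j * x j))) ` feas_S n m A a b)"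

definition val_R :: "nat \<Rightarrow> nat \<Rightarrow> (nat \<Rightarrow> real) \<Rightarrow> (nat \<Rightarrow> real) \<Rightarrow> (nat \<Rightarrow> nat \<Rightarrow> real)
    \<Rightarrow> (nat \<Rightarrow> nat \<Rightarrow> real) \<Rightarrow> (nat \<Rightarrow> real) \<Rightarrow> ereal" where
  "val_R n m D c A a b = Inf ((\<lambda>(x, z). ereal ((\<Sum>j\<in>{1..n}. D j * z j)
        + 2 * (\<Sum>j\<in>{1..n}. c j * x j))) `
     {(x, z). (\<forall>i\<in>{1..m}. (\<Sum>j\<in>{1..n}. A i j * z j) + 2 * (\<Sum>j\<in>{1..n}. a i j * x j) \<le> b i)
        \<and> (\<forall>j\<in>{1..n}. x j ^ 2 \<le> z j)})"

text \<open>Optimal value of the convex relaxation (R'), for the partition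
  Np h (h \<in> H), with \<xi> i h the common value of A^i_jj on Np h,
  and d* h = min of D_jj over Np h.\<close>
definition val_R' :: "nat \<Rightarrow> nat \<Rightarrow> 'h set \<Rightarrow> ('h \<Rightarrow> nat set) \<Rightarrow> (nat \<Rightarrow> 'h \<Rightarrow> real)
    \<Rightarrow> (nat \<Rightarrow> real) \<Rightarrow> (nat \<Rightarrow> real) \<Rightarrow> (nat \<Rightarrow> nat \<Rightarrow> real) \<Rightarrow> (nat \<Rightarrow> real) \<Rightarrow> ereal" where
  "val_R' n m H Np \<xi> D c a b = Inf ((\<lambda>(x, w). ereal (
        (\<Sum>h\<in>H. Min (D ` Np h) * w h)
        + (\<Sum>h\<in>H. \<Sum>j\<in>Np h. (D j - Min (D ` Np h)) * x j ^ 2)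
        + 2 * (\<Sum>h\<in>H. \<Sum>j\<in>Np h. c j * x j))) `
     {(x, w). (\<forall>i\<in>{1..m}. (\<Sum>h\<in>H. \<xi> i h * w h) + 2 * (\<Sum>h\<in>H. \<Sum>j\<in>Np h. a i j * x j) \<le> b i)
        \<and> (\<forall>h\<in>H. (\<Sum>j\<in>Np h. x j ^ 2) \<le> w h)})"

end

theory Submission
  imports Defs
begin

lemma mat_dot_diag: "finite I \<Longrightarrow> mat_dot I (diag_mat d) X = (\<Sum>i\<in>I. d i * X i i)"
  unfolding mat_dot_def diag_mat_def by (simp add: if_distrib[where f="\<lambda>t. t * _"] cong: if_cong)

lemma Inf_img_le:
  fixes f :: "'a \<times> 'b \<Rightarrow> ereal" and g :: "'c \<times> 'd \<Rightarrow> ereal"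
  assumes "\<And>x z. (x, z) \<in> S \<Longrightarrow> \<exists>x' z'. (x', z') \<in> T \<and> g (x', z') \<le> f (x, z)"
  shows "Inf (g ` T) \<le> Inf (f ` S)"
proof (rule Inf_mono)
  fix u assume "u \<in> f ` S"
  then obtain x z where xz: "(x, z) \<in> S" "u = f (x, z)" by auto
  from assms[OF xz(1)] obtain x' z' where "(x', z') \<in> T" "g (x', z') \<le> f (x, z)" by blast
  then show "\<exists>a\<in>g ` T. a \<le> u" using xz by blast
qed

theorem proposition2:
  fixes n m :: nat
    and D c :: "nat \<Rightarrow> real"
    and A a :: "nat \<Rightarrow> nat \<Rightarrow> real"
    and b :: "nat \<Rightarrow> real"
    and H :: "'h set" and Np :: "'h \<Rightarrow> nat set" and \<xi> :: "nat \<Rightarrow> 'h \<Rightarrow> real"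
  assumes A1_i: "feas_P n m A a b \<noteq> {}"
    and A1_ii: "\<exists>y::nat \<Rightarrow> real. (\<forall>i\<in>{1..m}. y i \<ge> 0) \<and>
                  mat_pd {1..n} (\<lambda>k l. \<Sum>i\<in>{1..m}. y i * diag_mat (A i) k l)"
    and A1_iii: "S_nonempty_interior n m A a b"
    and fin_H: "finite H"
    and part_ne: "\<forall>h\<in>H. Np h \<noteq> {}"
    and part_disj: "\<forall>h\<in>H. \<forall>h'\<in>H. h \<noteq> h' \<longrightarrow> Np h \<inter> Np h' = {}"
    and part_cover: "(\<Union>h\<in>H. Np h) = {1..n}"
    and xi: "\<forall>h\<in>H. \<forall>i\<in>{1..m}. \<forall>j\<in>Np h. A i j = \<xi> i h"
    and uniq_min: "\<forall>h\<in>H. \<exists>!j. j \<in> Np h \<and> D j = Min (D ` Np h)"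
  shows "val_R n m D c A a b = val_R' n m H Np \<xi> D c a b
       \<and> val_R' n m H Np \<xi> D c a b = val_S n m D c A a b"
proof -
  have finNp: "\<And>h. h \<in> H \<Longrightarrow> finite (Np h)"
  proof -
    fix h assume "h \<in> H"
    then have "Np h \<subseteq> {1..n}" using part_cover by blast
    then show "finite (Np h)" using finite_subset by blast
  qed
  have psum: "\<And>f::nat \<Rightarrow> real. (\<Sum>j\<in>{1..n}. f j) = (\<Sum>h\<in>H. \<Sum>j\<in>Np h. f j)"
  proof -
    fix f :: "nat \<Rightarrow> real"
    have "(\<Sum>j\<in>(\<Union>h\<in>H. Np h). f j) = (\<Sum>h\<in>H. \<Sum>j\<in>Np h. f j)"
      by (rule sum.UNION_disjoint) (use fin_H finNp part_disj in auto)
    then show "(\<Sum>j\<in>{1..n}. f j) = (\<Sum>h\<in>H. \<Sum>j\<in>Np h. f j)" using part_cover by simp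
  qed
  define dm where "dm h = Min (D ` Np h)" for h
  have dm_le: "\<And>h j. h \<in> H \<Longrightarrow> j \<in> Np h \<Longrightarrow> dm h \<le> D j"
    unfolding dm_def using finNp by auto
  define jm where "jm h = (SOME j. j \<in> Np h \<and> D j = dm h)" for h
  have jm: "\<And>h. h \<in> H \<Longrightarrow> jm h \<in> Np h \<and> D (jm h) = dm h"
  proof -
    fix h assume "h \<in> H"
    then have "\<exists>j. j \<in> Np h \<and> D j = dm h" using uniq_min unfolding dm_def by blast
    then show "jm h \<in> Np h \<and> D (jm h) = dm h" unfolding jm_def by (rule someI_ex)
  qed
  have Aconv: "\<And>i z. i \<in> {1..m} \<Longrightarrow>
      (\<Sum>j\<in>{1..n}. A i j * z j) = (\<Sum>h\<in>H. \<xi> i h * (\<Sum>j\<in>Np h. z j))"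
  proof -
    fix i z assume i: "i \<in> {1..m}"
    have "(\<Sum>j\<in>{1..n}. A i j * z j) = (\<Sum>h\<in>H. \<Sum>j\<in>Np h. A i j * z j)" by (rule psum)
    also have "\<dots> = (\<Sum>h\<in>H. \<xi> i h * (\<Sum>j\<in>Np h. z j))"
      by (rule sum.cong) (use xi i in \<open>auto simp: sum_distrib_left\<close>)
    finally show "(\<Sum>j\<in>{1..n}. A i j * z j) = (\<Sum>h\<in>H. \<xi> i h * (\<Sum>j\<in>Np h. z j))" .
  qed
  have cconv: "\<And>x. (\<Sum>j\<in>{1..n}. c j * x j) = (\<Sum>h\<in>H. \<Sum>j\<in>Np h. c j * x j)" by (rule psum)
  have aconv: "\<And>i x. (\<Sum>j\<in>{1..n}. a i j * x j) = (\<Sum>h\<in>H. \<Sum>j\<in>Np h. a i j * x j)" by (rule psum)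

  have R'_le_R: "val_R' n m H Np \<xi> D c a b \<le> val_R n m D c A a b"
    unfolding val_R_def val_R'_def
  proof (rule Inf_img_le)
    fix x z
    assume "(x, z) \<in> {(x, z). (\<forall>i\<in>{1..m}. (\<Sum>j\<in>{1..n}. A i j * z j) + 2 * (\<Sum>j\<in>{1..n}. a i j * x j) \<le> b i)
        \<and> (\<forall>j\<in>{1..n}. x j ^ 2 \<le> z j)}"
    then have c1: "\<forall>i\<in>{1..m}. (\<Sum>j\<in>{1..n}. A i j * z j) + 2 * (\<Sum>j\<in>{1..n}. a i j * x j) \<le> b i"
      and c2: "\<forall>j\<in>{1..n}. x j ^ 2 \<le> z j" by auto
    have c2': "\<And>h j. h \<in> H \<Longrightarrow> j \<in> Np h \<Longrightarrow> x j ^ 2 \<le> z j"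
      using c2 part_cover by auto
    define w where "w h = (\<Sum>j\<in>Np h. z j)" for h
    have feas: "(\<forall>i\<in>{1..m}. (\<Sum>h\<in>H. \<xi> i h * w h) + 2 * (\<Sum>h\<in>H. \<Sum>j\<in>Np h. a i j * x j) \<le> b i)
        \<and> (\<forall>h\<in>H. (\<Sum>j\<in>Np h. x j ^ 2) \<le> w h)"
      using c1 Aconv aconv c2' unfolding w_def by (auto intro: sum_mono)
    have obj: "(\<Sum>h\<in>H. dm h * w h) + (\<Sum>h\<in>H. \<Sum>j\<in>Np h. (D j - dm h) * x j ^ 2)
        \<le> (\<Sum>j\<in>{1..n}. D j * z j)"
    proof -
      have "(\<Sum>h\<in>H. dm h * w h) + (\<Sum>h\<in>H. \<Sum>j\<in>Np h. (D j - dm h) * x j ^ 2)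
          = (\<Sum>h\<in>H. \<Sum>j\<in>Np h. dm h * z j + (D j - dm h) * x j ^ 2)"
        unfolding w_def by (simp add: sum.distrib sum_distrib_left)
      also have "\<dots> \<le> (\<Sum>h\<in>H. \<Sum>j\<in>Np h. D j * z j)"
      proof (rule sum_mono, rule sum_mono)
        fix h j assume h: "h \<in> H" and j: "j \<in> Np h"
        have "0 \<le> (D j - dm h) * (z j - x j ^ 2)"
          using dm_le[OF h j] c2'[OF h j] by simp
        then show "dm h * z j + (D j - dm h) * x j ^ 2 \<le> D j * z j"
          by (simp add: algebra_simps)
      qed
      also have "\<dots> = (\<Sum>j\<in>{1..n}. D j * z j)" by (rule psum[symmetric])
      finally show ?thesis .
    qed
    show "\<exists>x' z'. (x', z') \<in> {(x, w). (\<forall>i\<in>{1..m}. (\<Sum>h\<in>H. \<xi> i h * w h) + 2 * (\<Sum>h\<in>H. \<Sum>j\<in>Np h. a i j * x j) \<le> b i)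
        \<and> (\<forall>h\<in>H. (\<Sum>j\<in>Np h. x j ^ 2) \<le> w h)} \<and>
       (\<lambda>(x, w). ereal ((\<Sum>h\<in>H. Min (D ` Np h) * w h)
        + (\<Sum>h\<in>H. \<Sum>j\<in>Np h. (D j - Min (D ` Np h)) * x j ^ 2)
        + 2 * (\<Sum>h\<in>H. \<Sum>j\<in>Np h. c j * x j))) (x', z')
       \<le> (\<lambda>(x, z). ereal ((\<Sum>j\<in>{1..n}. D j * z j) + 2 * (\<Sum>j\<in>{1..n}. c j * x j))) (x, z)"
      apply (rule exI[of _ x], rule exI[of _ w])
      using feas obj cconv[of x] unfolding dm_def by simp
  qed

  have R_le_R': "val_R n m D c A a b \<le> val_R' n m H Np \<xi> D c a b"
    unfolding val_R_def val_R'_def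
  proof (rule Inf_img_le)
    fix x w
    assume "(x, w) \<in> {(x, w). (\<forall>i\<in>{1..m}. (\<Sum>h\<in>H. \<xi> i h * w h) + 2 * (\<Sum>h\<in>H. \<Sum>j\<in>Np h. a i j * x j) \<le> b i)
        \<and> (\<forall>h\<in>H. (\<Sum>j\<in>Np h. x j ^ 2) \<le> w h)}"
    then have c1: "\<forall>i\<in>{1..m}. (\<Sum>h\<in>H. \<xi> i h * w h) + 2 * (\<Sum>h\<in>H. \<Sum>j\<in>Np h. a i j * x j) \<le> b i"
      and c2: "\<forall>h\<in>H. (\<Sum>j\<in>Np h. x j ^ 2) \<le> w h" by auto
    define s where "s h = w h - (\<Sum>j\<in>Np h. x j ^ 2)" for h
    define z where "z j = x j ^ 2 + (\<Sum>h\<in>H. if j = jm h then s h else 0)" for j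
    have zloc: "\<And>h j. h \<in> H \<Longrightarrow> j \<in> Np h \<Longrightarrow> z j = x j ^ 2 + (if j = jm h then s h else 0)"
    proof -
      fix h j assume h: "h \<in> H" and j: "j \<in> Np h"
      have "(\<Sum>h'\<in>H. if j = jm h' then s h' else 0) = (\<Sum>h'\<in>H. if h' = h then (if j = jm h then s h else 0) else 0)"
      proof (rule sum.cong)
        fix h' assume h': "h' \<in> H"
        show "(if j = jm h' then s h' else 0) = (if h' = h then (if j = jm h then s h else 0) else 0)"
        proof (cases "h' = h")
          case False
          then have "Np h' \<inter> Np h = {}" using part_disj h h' by blast
          then have "j \<noteq> jm h'" using jm[OF h'] j by blast
          then show ?thesis using False by simp
        qed simp
      qed simp
      also have "\<dots> = (if j = jm h then s h else 0)" using h fin_H by simp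
      finally show "z j = x j ^ 2 + (if j = jm h then s h else 0)" unfolding z_def by simp
    qed
    have zsum: "\<And>h. h \<in> H \<Longrightarrow> (\<Sum>j\<in>Np h. z j) = w h"
    proof -
      fix h assume h: "h \<in> H"
      have "(\<Sum>j\<in>Np h. z j) = (\<Sum>j\<in>Np h. x j ^ 2 + (if j = jm h then s h else 0))"
        using zloc[OF h] by (rule sum.cong[OF refl])
      also have "\<dots> = (\<Sum>j\<in>Np h. x j ^ 2) + s h"
        using jm[OF h] finNp[OF h] by (simp add: sum.distrib)
      finally show "(\<Sum>j\<in>Np h. z j) = w h" unfolding s_def by simp
    qed
    have feas: "(\<forall>i\<in>{1..m}. (\<Sum>j\<in>{1..n}. A i j * z j) + 2 * (\<Sum>j\<in>{1..n}. a i j * x j) \<le> b i)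
        \<and> (\<forall>j\<in>{1..n}. x j ^ 2 \<le> z j)"
    proof
      show "\<forall>i\<in>{1..m}. (\<Sum>j\<in>{1..n}. A i j * z j) + 2 * (\<Sum>j\<in>{1..n}. a i j * x j) \<le> b i"
        using c1 Aconv aconv zsum by simp
      show "\<forall>j\<in>{1..n}. x j ^ 2 \<le> z j"
      proof
        fix j assume "j \<in> {1..n}"
        then obtain h where h: "h \<in> H" and j: "j \<in> Np h" using part_cover by blast
        have "0 \<le> s h" using c2 h unfolding s_def by simp
        then show "x j ^ 2 \<le> z j" using zloc[OF h j] by simp
      qed
    qed
    have obj: "(\<Sum>j\<in>{1..n}. D j * z j) = (\<Sum>h\<in>H. dm h * w h) + (\<Sum>h\<in>H. \<Sum>j\<in>Np h. (D j - dm h) * x j ^ 2)"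
    proof -
      have "(\<Sum>j\<in>{1..n}. D j * z j) = (\<Sum>h\<in>H. \<Sum>j\<in>Np h. D j * z j)" by (rule psum)
      also have "\<dots> = (\<Sum>h\<in>H. dm h * w h + (\<Sum>j\<in>Np h. (D j - dm h) * x j ^ 2))"
      proof (rule sum.cong[OF refl])
        fix h assume h: "h \<in> H"
        have "(\<Sum>j\<in>Np h. D j * z j) = (\<Sum>j\<in>Np h. D j * x j ^ 2 + (if j = jm h then D j * s h else 0))"
          by (rule sum.cong[OF refl]) (simp add: zloc[OF h] algebra_simps)
        also have "\<dots> = (\<Sum>j\<in>Np h. D j * x j ^ 2) + dm h * s h"
          using jm[OF h] finNp[OF h] by (simp add: sum.distrib)
        also have "\<dots> = dm h * w h + (\<Sum>j\<in>Np h. (D j - dm h) * x j ^ 2)"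
          unfolding s_def by (simp add: algebra_simps sum_subtractf sum_distrib_left)
        finally show "(\<Sum>j\<in>Np h. D j * z j) = dm h * w h + (\<Sum>j\<in>Np h. (D j - dm h) * x j ^ 2)" .
      qed
      also have "\<dots> = (\<Sum>h\<in>H. dm h * w h) + (\<Sum>h\<in>H. \<Sum>j\<in>Np h. (D j - dm h) * x j ^ 2)"
        by (simp add: sum.distrib)
      finally show ?thesis .
    qed
    show "\<exists>x' z'. (x', z') \<in> {(x, z). (\<forall>i\<in>{1..m}. (\<Sum>j\<in>{1..n}. A i j * z j) + 2 * (\<Sum>j\<in>{1..n}. a i j * x j) \<le> b i)
        \<and> (\<forall>j\<in>{1..n}. x j ^ 2 \<le> z j)} \<and>
       (\<lambda>(x, z). ereal ((\<Sum>j\<in>{1..n}. D j * z j) + 2 * (\<Sum>j\<in>{1..n}. c j * x j))) (x', z')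
       \<le> (\<lambda>(x, w). ereal ((\<Sum>h\<in>H. Min (D ` Np h) * w h)
        + (\<Sum>h\<in>H. \<Sum>j\<in>Np h. (D j - Min (D ` Np h)) * x j ^ 2)
        + 2 * (\<Sum>h\<in>H. \<Sum>j\<in>Np h. c j * x j))) (x, w)"
      apply (rule exI[of _ x], rule exI[of _ z])
      using feas obj cconv[of x] unfolding dm_def by simp
  qed

  have R_le_S: "val_R n m D c A a b \<le> val_S n m D c A a b"
    unfolding val_R_def val_S_def
  proof (rule Inf_img_le)
    fix x X assume "(x, X) \<in> feas_S n m A a b"
    then have c1: "\<forall>i\<in>{1..m}. mat_dot {1..n} (diag_mat (A i)) X + 2 * (\<Sum>j\<in>{1..n}. a i j * x j) \<le> b i"
      and psd: "mat_psd {1..n} (\<lambda>k l. X k l - x k * x l)" unfolding feas_S_def by auto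
    define z where "z j = X j j" for j
    have diagpos: "\<forall>j\<in>{1..n}. x j ^ 2 \<le> z j"
    proof
      fix j assume j: "j \<in> {1..n}"
      have "0 \<le> (\<Sum>i\<in>{1..n}. \<Sum>k\<in>{1..n}. (if i = j then 1 else 0) * (X i k - x i * x k) * (if k = j then 1 else 0))"
        using spec[OF conjunct2[OF psd[unfolded mat_psd_def]], of "\<lambda>i. if i = j then 1 else 0"] by simp
      also have "\<dots> = X j j - x j * x j"
      proof -
        have e: "\<And>i k. (if i = j then 1 else 0) * (X i k - x i * x k) * (if k = j then 1 else 0)
            = (if k = j then (if i = j then X j j - x j * x j else 0) else (0::real))" by auto
        show ?thesis unfolding e using j by simp
      qed
      finally show "x j ^ 2 \<le> z j" unfolding z_def by (simp add: power2_eq_square)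
    qed
    show "\<exists>x' z'. (x', z') \<in> {(x, z). (\<forall>i\<in>{1..m}. (\<Sum>j\<in>{1..n}. A i j * z j) + 2 * (\<Sum>j\<in>{1..n}. a i j * x j) \<le> b i)
        \<and> (\<forall>j\<in>{1..n}. x j ^ 2 \<le> z j)} \<and>
       (\<lambda>(x, z). ereal ((\<Sum>j\<in>{1..n}. D j * z j) + 2 * (\<Sum>j\<in>{1..n}. c j * x j))) (x', z')
       \<le> (\<lambda>(x, X). ereal (mat_dot {1..n} (diag_mat D) X + 2 * (\<Sum>j\<in>{1..n}. c j * x j))) (x, X)"
      apply (rule exI[of _ x], rule exI[of _ z])
      using c1 diagpos by (simp add: mat_dot_diag z_def)
  qed

  have S_le_R: "val_S n m D c A a b \<le> val_R n m D c A a b"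
    unfolding val_R_def val_S_def
  proof (rule Inf_img_le)
    fix x z
    assume "(x, z) \<in> {(x, z). (\<forall>i\<in>{1..m}. (\<Sum>j\<in>{1..n}. A i j * z j) + 2 * (\<Sum>j\<in>{1..n}. a i j * x j) \<le> b i)
        \<and> (\<forall>j\<in>{1..n}. x j ^ 2 \<le> z j)}"
    then have c1: "\<forall>i\<in>{1..m}. (\<Sum>j\<in>{1..n}. A i j * z j) + 2 * (\<Sum>j\<in>{1..n}. a i j * x j) \<le> b i"
      and c2: "\<forall>j\<in>{1..n}. x j ^ 2 \<le> z j" by auto
    define X where "X k l = x k * x l + (if k = l then z k - x k ^ 2 else 0)" for k l
    have Xd: "\<And>k. X k k = z k" unfolding X_def by (simp add: power2_eq_square)
    have psd: "mat_psd {1..n} (\<lambda>k l. X k l - x k * x l)"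
      unfolding mat_psd_def mat_sym_def
    proof (intro conjI allI ballI)
      fix k l show "X k l - x k * x l = X l k - x l * x k" unfolding X_def by auto
    next
      fix v :: "nat \<Rightarrow> real"
      have "(\<Sum>i\<in>{1..n}. \<Sum>j\<in>{1..n}. v i * (X i j - x i * x j) * v j)
          = (\<Sum>i\<in>{1..n}. v i * (z i - x i ^ 2) * v i)"
      proof -
        have e: "\<And>i j. v i * (X i j - x i * x j) * v j = (if j = i then v i * (z i - x i ^ 2) * v i else 0)"
          unfolding X_def by auto
        show ?thesis unfolding e by simp
      qed
      also have "\<dots> \<ge> 0"
      proof (rule sum_nonneg)
        fix i assume "i \<in> {1..n}"
        then have "0 \<le> z i - x i ^ 2" using c2 by simp
        then have "0 \<le> (v i * v i) * (z i - x i ^ 2)" by simp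
        then show "0 \<le> v i * (z i - x i ^ 2) * v i" by (simp add: algebra_simps)
      qed
      finally show "0 \<le> (\<Sum>i\<in>{1..n}. \<Sum>j\<in>{1..n}. v i * (X i j - x i * x j) * v j)" .
    qed
    show "\<exists>x' X'. (x', X') \<in> feas_S n m A a b \<and>
       (\<lambda>(x, X). ereal (mat_dot {1..n} (diag_mat D) X + 2 * (\<Sum>j\<in>{1..n}. c j * x j))) (x', X')
       \<le> (\<lambda>(x, z). ereal ((\<Sum>j\<in>{1..n}. D j * z j) + 2 * (\<Sum>j\<in>{1..n}. c j * x j))) (x, z)"
      apply (rule exI[of _ x], rule exI[of _ X])
      using c1 psd by (simp add: feas_S_def mat_dot_diag Xd)
  qed
  show ?thesis using R'_le_R R_le_R' R_le_S S_le_R by (metis antisym)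
qed

end
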